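(* Let $n\geq 0$ be an integer and let $\alpha,\beta\in\mathbb{C}$ with $\beta\neq 0$ and $\alpha^2\neq 4\beta$. Fix a square root $\sqrt{\alpha^2-4\beta}$ and write $D=\alpha^2-4\beta$, with $D^{t/2}:=(\sqrt{D})^{t}$. Then $$M_n^{(\alpha,\beta)}=\sum_{k=0}^{n+1}\left(\frac{\alpha+\sqrt{D}}{2}\right)^{n-2k}\frac{\beta^k}{n+1}\binom{n+1}{k}\binom{n+1}{k+1} =\frac{D^{\frac{n+2}{2}}}{\beta}\sum_{k=0}^{n+1}\left(\frac{\alpha}{\sqrt{D}}-1\right)^{k+1}\frac{C_k}{2^{k+1}}\binom{n+1+k}{2k},$$ where $C_k$ is the $k$-th Catalan number and $M_n^{(\alpha,\beta)}$ is the weighted Motzkin number defined in the context.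
   Context: $C_k=\frac{1}{k+1}\binom{2k}{k}$ are the Catalan numbers. For an integer $m\geq 0$ and $a,b\in\mathbb{C}$, the $(a,b)$-Motzkin number is $M_m^{(a,b)}=\sum_{k=0}^{\lfloor m/2\rfloor}\binom{m}{2k}C_k a^{m-2k}b^k$. (Binomial coefficients $\binom{p}{q}$ with $q>p$ are $0$.) *)

theory Defs
  imports Complex_Main
begin

definition catalan :: "nat \<Rightarrow> nat" where
  "catalan k = (2*k choose k) div (k+1)"

definition motzkin :: "nat \<Rightarrow> complex \<Rightarrow> complex \<Rightarrow> complex" where
  "motzkin m a b = (\<Sum>k=0..m div 2. of_nat (m choose (2*k)) * of_nat (catalan k) * a^(m - 2*k) * b^k)"

end

theory Submission
  imports Defs
begin

lemma termA:
  assumes "j \<le> k" "k \<le> n"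
  shows "(of_nat (k+1) :: complex) * (of_nat (n choose (2*j)) * (of_nat (2*j choose j) / of_nat (j+1)) * of_nat ((n-2*j) choose (k-j)))
     = of_nat (n choose k) * of_nat ((k+1) choose (j+1)) * of_nat ((n-k) choose j)"
proof (cases "2*j \<le> n \<and> j \<le> n - k")
  case True
  define p q where "p = k - j" and "q = n - k - j"
  have pq: "k = j + p" "n = k + j + q" using True assms by (auto simp: p_def q_def)
  define N where "N = j+p+j+q"
  have e1: "n - 2*j = p + q" "n - k = j + q" "k - j = p" "n = N" "k = j + p" using pq N_def by auto
  have b1: "(of_nat (N choose (2*j)) :: complex) = fact N / (fact (2*j) * fact (p+q))"
    using binomial_fact[of "2*j" N] N_def by (simp add: N_def)
  have b2: "(of_nat (2*j choose j) :: complex) = fact (2*j) / (fact j * fact j)"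
    using binomial_fact[of "j" "2*j"] by simp
  have b3: "(of_nat ((p+q) choose p) :: complex) = fact (p+q) / (fact p * fact q)"
    using binomial_fact[of p "p+q"] by simp
  have b4: "(of_nat (N choose (j+p)) :: complex) = fact N / (fact (j+p) * fact (j+q))"
    using binomial_fact[of "j+p" N] by (simp add: N_def)
  have b5: "(of_nat ((j+p+1) choose (j+1)) :: complex) = fact (j+p+1) / (fact (j+1) * fact p)"
    using binomial_fact[of "j+1" "j+p+1"] by simp
  have b6: "(of_nat ((j+q) choose j) :: complex) = fact (j+q) / (fact j * fact q)"
    using binomial_fact[of "j" "j+q"] by simp
  have f: "(fact (j+p+1) :: complex) = of_nat (j+p+1) * fact (j+p)"
    by (simp add: algebra_simps)
  have f2: "(fact (j+1) :: complex) = of_nat (j+1) * fact j"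
    by (simp add: algebra_simps)
  have nz: "(fact x :: complex) \<noteq> 0" for x by simp
  show ?thesis
    unfolding e1(1-3) unfolding e1(4,5) b1 b2 b3 b4 b5 b6 f f2
    using nz[of N] nz[of j] nz[of p] nz[of q] nz[of "j+p"] nz[of "j+q"] nz[of "p+q"] nz[of "2*j"]
    by (simp add: divide_simps del: of_nat_add fact_Suc)
next
  case False
  then consider "n < 2*j" | "2*j \<le> n" "n - k < j" by linarith
  then show ?thesis
  proof cases
    case 1
    then have "n choose (2*j) = 0" "(n-k) choose j = 0" using assms by auto
    note h = this show ?thesis unfolding h by simp
  next
    case 2
    then have "n - 2*j < k - j" using assms by linarith
    then have "(n-2*j) choose (k-j) = 0" "(n-k) choose j = 0" using 2 by auto
    note h = this show ?thesis unfolding h by simp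
  qed
qed

lemma sumA:
  assumes "k \<le> n"
  shows "(\<Sum>j\<le>k. of_nat (n choose (2*j)) * (of_nat (2*j choose j) / of_nat (j+1)) * of_nat ((n-2*j) choose (k-j)))
     = (of_nat (n choose k) * of_nat ((n+1) choose k) / of_nat (k+1) :: complex)"
proof -
  have v: "(\<Sum>j\<le>k. ((n-k) choose j) * ((k+1) choose (k-j))) = (n+1) choose k"
    using vandermonde[where r=k and m="n-k" and n="k+1"] assms by simp
  have sy: "Suc k choose (k-j) = Suc k choose Suc j" if "j \<le> k" for j
    using binomial_symmetric[of "k-j" "k+1"] that by simp
  have "(of_nat (k+1) :: complex) * (\<Sum>j\<le>k. of_nat (n choose (2*j)) * (of_nat (2*j choose j) / of_nat (j+1)) * of_nat ((n-2*j) choose (k-j)))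
     = (\<Sum>j\<le>k. of_nat (n choose k) * of_nat ((k+1) choose (j+1)) * of_nat ((n-k) choose j))"
    unfolding sum_distrib_left using termA assms by (intro sum.cong) auto
  also have "\<dots> = of_nat (n choose k) * of_nat (\<Sum>j\<le>k. ((n-k) choose j) * ((k+1) choose (k-j)))"
    unfolding of_nat_sum sum_distrib_left by (intro sum.cong refl) (simp add: sy del: binomial_Suc_Suc of_nat_Suc)
  also have "\<dots> = of_nat (n choose k) * of_nat ((n+1) choose k)" unfolding v ..
  finally show ?thesis
    by (simp add: field_simps del: of_nat_Suc)
qed

lemma termC:
  assumes "k \<le> j" "j \<le> Suc n"
  shows "(of_nat (n choose k) * of_nat ((n+1) choose k) / of_nat (k+1)) * of_nat (((n+1)-k) choose (j-k))
     = (of_nat ((n+1) choose j) / of_nat (n+1) * of_nat ((j choose (j-k)) * ((n+1) choose (k+1))) :: complex)"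
proof -
  have a: "of_nat (k+1) * of_nat ((n+1) choose (k+1)) = (of_nat (n+1) * of_nat (n choose k) :: complex)"
    using Suc_times_binomial[of k n] by (metis of_nat_mult Suc_eq_plus1)
  have b: "((n+1) choose j) * (j choose k) = ((n+1) choose k) * (((n+1) - k) choose (j-k))"
    using choose_mult[of k j "n+1"] assms by simp
  have c: "j choose (j-k) = j choose k" using binomial_symmetric[of k j] assms by simp
  have b': "of_nat ((n+1) choose j) * of_nat (j choose k) = (of_nat ((n+1) choose k) * of_nat (((n+1) - k) choose (j-k)) :: complex)"
    using b by (metis of_nat_mult)
  show ?thesis unfolding c of_nat_mult
    using a b' by (simp add: field_simps del: of_nat_Suc of_nat_add) (metis mult.commute mult.left_commute)
qed

lemma finalC:
  assumes "j \<le> Suc n"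
  shows "(of_nat (Suc n choose j) / of_nat (Suc n) * of_nat (Suc n + j choose Suc j) :: complex)
       = of_nat (2*j choose j) / of_nat (j+1) * of_nat (Suc n + j choose (2*j))"
proof -
  define q where "q = Suc n - j"
  have qj: "Suc n = j + q" using assms q_def by simp
  have b1: "(of_nat (Suc n choose j) :: complex) = fact (Suc n) / (fact j * fact q)"
    using binomial_fact[of j "Suc n"] assms qj by simp
  have b2: "(of_nat (Suc n + j choose Suc j) :: complex) = fact (Suc n + j) / (fact (Suc j) * fact n)"
    using binomial_fact[of "Suc j" "Suc n + j"] by simp
  have b3: "(of_nat (2*j choose j) :: complex) = fact (2*j) / (fact j * fact j)"
    using binomial_fact[of "j" "2*j"] by simp
  have b4: "(of_nat (Suc n + j choose (2*j)) :: complex) = fact (Suc n + j) / (fact (2*j) * fact q)"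
    using binomial_fact[of "2*j" "Suc n + j"] qj by simp
  have f1: "(fact (Suc n) :: complex) = of_nat (Suc n) * fact n" by simp
  have f2: "(fact (Suc j) :: complex) = of_nat (Suc j) * fact j" by simp
  have nz: "(fact x :: complex) \<noteq> 0" for x by simp
  show ?thesis unfolding b1 b2 b3 b4 unfolding f1 f2
    using nz[of n] nz[of j] nz[of q] nz[of "2*j"] nz[of "Suc n + j"]
    by (simp add: divide_simps del: of_nat_add fact_Suc of_nat_Suc)
qed

lemma sumC:
  assumes "j \<le> Suc n"
  shows "(\<Sum>k\<le>j. (of_nat (n choose k) * of_nat ((n+1) choose k) / of_nat (k+1)) * of_nat (((n+1)-k) choose (j-k)))
     = (of_nat (2*j choose j) / of_nat (j+1) * of_nat ((n+1+j) choose (2*j)) :: complex)"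
proof -
  have v: "(\<Sum>k\<le>j. (j choose (j-k)) * ((n+1) choose (k+1))) = (n+1+j) choose (j+1)"
  proof -
    have "(\<Sum>i\<le>Suc j. ((n+1) choose i) * (j choose (Suc j - i))) = (n+1+j) choose Suc j"
      by (rule vandermonde)
    thus ?thesis unfolding sum.atMost_Suc_shift by (simp add: mult.commute binomial_eq_0 del: binomial_Suc_Suc)
  qed
  have "(\<Sum>k\<le>j. (of_nat (n choose k) * of_nat ((n+1) choose k) / of_nat (k+1)) * of_nat (((n+1)-k) choose (j-k)))
     = (\<Sum>k\<le>j. (of_nat ((n+1) choose j) / of_nat (n+1) * of_nat ((j choose (j-k)) * ((n+1) choose (k+1))) :: complex))"
    using termC assms by (intro sum.cong refl) auto
  also have "\<dots> = of_nat ((n+1) choose j) / of_nat (n+1) * of_nat ((n+1+j) choose (j+1))"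
    unfolding sum_distrib_left[symmetric] of_nat_sum[symmetric] v ..
  also have "\<dots> = of_nat (2*j choose j) / of_nat (j+1) * of_nat ((n+1+j) choose (2*j))"
    using finalC[OF assms] by simp
  finally show ?thesis .
qed

lemma tri: "(\<Sum>k\<le>N. \<Sum>i\<le>N-k. f k i) = (\<Sum>j\<le>N. \<Sum>k\<le>j. f k (j-k :: nat)) "
proof -
  have "{(i,j). i+j \<le> N} = Sigma {..N} (\<lambda>k. {..N-k})" by auto
  hence "(\<Sum>k\<le>N. \<Sum>i\<le>N-k. f k i) = (\<Sum>(i,j)\<in>{(i,j). i+j \<le> N}. f i j)"
    by (simp add: sum.Sigma)
  also have "\<dots> = (\<Sum>j\<le>N. \<Sum>k\<le>j. f k (j-k))" by (rule sum.triangle_reindex_eq)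
  finally show ?thesis .
qed

lemma expand:
  fixes w :: complex
  shows "(\<Sum>k\<le>N. a k * w^k * (1+w)^(N-k)) = (\<Sum>j\<le>N. (\<Sum>k\<le>j. a k * of_nat ((N-k) choose (j-k))) * w^j)"
proof -
  have "(\<Sum>k\<le>N. a k * w^k * (1+w)^(N-k)) = (\<Sum>k\<le>N. \<Sum>i\<le>N-k. a k * of_nat ((N-k) choose i) * w^(k+i))"
  proof (rule sum.cong[OF refl])
    fix k assume "k \<in> {..N}"
    have "(1+w)^(N-k) = (\<Sum>i\<le>N-k. of_nat ((N-k) choose i) * w^i)"
      using binomial_ring[of w 1 "N-k"] by (simp add: add.commute)
    thus "a k * w^k * (1+w)^(N-k) = (\<Sum>i\<le>N-k. a k * of_nat ((N-k) choose i) * w^(k+i))"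
      by (simp add: sum_distrib_left power_add mult_ac)
  qed
  also have "\<dots> = (\<Sum>j\<le>N. \<Sum>k\<le>j. a k * of_nat ((N-k) choose (j-k)) * w^(k+(j-k)))"
    by (rule tri)
  also have "\<dots> = (\<Sum>j\<le>N. (\<Sum>k\<le>j. a k * of_nat ((N-k) choose (j-k))) * w^j)"
    by (auto intro!: sum.cong simp: sum_distrib_right)
  finally show ?thesis .
qed

lemma catalan_eq: "(of_nat (catalan k) :: complex) = of_nat (2*k choose k) / of_nat (k+1)"
proof -
  have a: "Suc k * (2*k choose Suc k) = k * (2*k choose k)"
  proof (cases k)
    case 0 then show ?thesis by simp
  next
    case (Suc m)
    then show ?thesis using Suc_times_binomial_add[of k m] by (simp add: mult_2)
  qed
  have "2*k choose k = (k+1) * ((2*k choose k) - (2*k choose Suc k))"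
    using a by (simp add: diff_mult_distrib2 algebra_simps)
  hence "catalan k = (2*k choose k) - (2*k choose Suc k)"
    unfolding catalan_def by (metis add_gr_0 less_numeral_extra(1) nonzero_mult_div_cancel_left not_gr0)
  hence "of_nat (catalan k) * of_nat (k+1) = (of_nat (2*k choose k) :: complex)"
    using \<open>2*k choose k = _\<close> by (metis mult.commute of_nat_mult)
  thus ?thesis by (simp add: field_simps del: of_nat_Suc of_nat_add)
qed


lemma motA:
  fixes t :: complex
  shows "(\<Sum>j=0..n div 2. of_nat (n choose (2*j)) * of_nat (catalan j) * t^j * (1+t)^(n-2*j))
       = (\<Sum>k\<le>n. (of_nat (n choose k) * of_nat ((n+1) choose k) / of_nat (k+1)) * t^k)"
proof -
  define a where "a j = (of_nat (n choose (2*j)) * (of_nat (2*j choose j) / of_nat (j+1)) :: complex)" for j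
  have "(\<Sum>j=0..n div 2. of_nat (n choose (2*j)) * of_nat (catalan j) * t^j * (1+t)^(n-2*j))
      = (\<Sum>j\<le>n. a j * t^j * (1+t)^(n-2*j))"
  proof (rule sum.mono_neutral_cong_left)
    show "\<forall>j\<in>{..n} - {0..n div 2}. a j * t^j * (1+t)^(n-2*j) = 0"
    proof
      fix j assume "j \<in> {..n} - {0..n div 2}"
      hence "n < 2*j" by auto
      hence "n choose (2*j) = 0" by simp
      thus "a j * t^j * (1+t)^(n-2*j) = 0" unfolding a_def by simp
    qed
  qed (auto simp: a_def catalan_eq)
  also have "\<dots> = (\<Sum>j\<le>n. \<Sum>i\<le>n-j. a j * of_nat ((n-2*j) choose i) * t^(j+i))"
  proof (rule sum.cong[OF refl])
    fix j assume "j \<in> {..n}"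
    have "(1+t)^(n-2*j) = (\<Sum>i\<le>n-2*j. of_nat ((n-2*j) choose i) * t^i)"
      using binomial_ring[of t 1 "n-2*j"] by (simp add: add.commute)
    also have "\<dots> = (\<Sum>i\<le>n-j. of_nat ((n-2*j) choose i) * t^i)"
      by (rule sum.mono_neutral_left) auto
    finally show "a j * t^j * (1+t)^(n-2*j) = (\<Sum>i\<le>n-j. a j * of_nat ((n-2*j) choose i) * t^(j+i))"
      by (simp add: sum_distrib_left power_add mult_ac)
  qed
  also have "\<dots> = (\<Sum>k\<le>n. \<Sum>j\<le>k. a j * of_nat ((n-2*j) choose (k-j)) * t^(j+(k-j)))"
    by (rule tri)
  also have "\<dots> = (\<Sum>k\<le>n. (\<Sum>j\<le>k. a j * of_nat ((n-2*j) choose (k-j))) * t^k)"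
    by (auto intro!: sum.cong simp: sum_distrib_right)
  also have "\<dots> = (\<Sum>k\<le>n. (of_nat (n choose k) * of_nat ((n+1) choose k) / of_nat (k+1)) * t^k)"
    by (intro sum.cong refl, subst sumA[symmetric]) (auto simp: a_def)
  finally show ?thesis .
qed


lemma motC:
  fixes w :: complex
  shows "(\<Sum>j\<le>Suc n. of_nat (catalan j) * of_nat ((n+1+j) choose (2*j)) * w^j)
       = (1+w) * (\<Sum>k\<le>n. (of_nat (n choose k) * of_nat ((n+1) choose k) / of_nat (k+1)) * w^k * (1+w)^(n-k))"
proof -
  define c where "c k = (of_nat (n choose k) * of_nat ((n+1) choose k) / of_nat (k+1) :: complex)" for k
  have "(1+w) * (\<Sum>k\<le>n. c k * w^k * (1+w)^(n-k)) = (\<Sum>k\<le>n. c k * w^k * (1+w)^(Suc n-k))"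
    unfolding sum_distrib_left
    by (intro sum.cong refl) (simp add: Suc_diff_le mult_ac)
  also have "\<dots> = (\<Sum>k\<le>Suc n. c k * w^k * (1+w)^(Suc n-k))"
    by (simp add: c_def)
  also have "\<dots> = (\<Sum>j\<le>Suc n. (\<Sum>k\<le>j. c k * of_nat ((Suc n-k) choose (j-k))) * w^j)"
    by (rule expand)
  also have "\<dots> = (\<Sum>j\<le>Suc n. of_nat (catalan j) * of_nat ((n+1+j) choose (2*j)) * w^j)"
    by (intro sum.cong refl) (use sumC in \<open>auto simp: c_def catalan_eq\<close>)
  finally show ?thesis unfolding c_def by simp
qed

theorem proposition3p2:
  fixes n :: nat and \<alpha> \<beta> s :: complex
  assumes "\<beta> \<noteq> 0" and "\<alpha>^2 \<noteq> 4*\<beta>" and "s^2 = \<alpha>^2 - 4*\<beta>"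
  shows "(motzkin n \<alpha> \<beta> =
           (\<Sum>k=0..n+1. ((\<alpha> + s)/2) powi (int n - 2 * int k) * \<beta>^k / of_nat (n+1)
              * of_nat ((n+1) choose k) * of_nat ((n+1) choose (k+1)))) \<and>
         (motzkin n \<alpha> \<beta> =
           s^(n+2) / \<beta> * (\<Sum>k=0..n+1. (\<alpha>/s - 1)^(k+1) * of_nat (catalan k) / 2^(k+1)
              * of_nat ((n+1+k) choose (2*k))))"
proof -
  define c where "c k = (of_nat (n choose k) * of_nat ((n+1) choose k) / of_nat (k+1) :: complex)" for k
  define x where "x = (\<alpha> + s)/2"
  define y where "y = (\<alpha> - s)/2"
  have sxy: "x + y = \<alpha>" unfolding x_def y_def by (simp add: field_simps)
  have "x * y = (\<alpha>^2 - s^2)/4" unfolding x_def y_def by (simp add: field_simps power2_eq_square)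
  hence bxy: "x * y = \<beta>" using assms(3) by simp
  have x0: "x \<noteq> 0" and y0: "y \<noteq> 0" using bxy assms(1) by auto
  have s0: "s \<noteq> 0" using assms(2,3) by auto
  define t where "t = y / x"
  have at: "\<alpha> = x * (1+t)" and bt: "\<beta> = x^2 * t"
    using sxy bxy x0 unfolding t_def by (auto simp: field_simps power2_eq_square)
  define P where "P = x^n * (\<Sum>k\<le>n. c k * t^k)"
  have M: "motzkin n \<alpha> \<beta> = P"
  proof -
    have "motzkin n \<alpha> \<beta> = (\<Sum>j=0..n div 2. x^n * (of_nat (n choose (2*j)) * of_nat (catalan j) * t^j * (1+t)^(n-2*j)))"
      unfolding motzkin_def
    proof (intro sum.cong refl)
      fix j assume "j \<in> {0..n div 2}"
      hence j: "2*j \<le> n" by auto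
      have "x^n = x^(n-2*j) * (x^2)^j" using j by (simp add: power_mult[symmetric] power_add[symmetric])
      thus "of_nat (n choose (2*j)) * of_nat (catalan j) * \<alpha>^(n-2*j) * \<beta>^j
          = x^n * (of_nat (n choose (2*j)) * of_nat (catalan j) * t^j * (1+t)^(n-2*j))"
        unfolding at bt by (simp add: power_mult_distrib mult_ac)
    qed
    also have "\<dots> = P" unfolding P_def sum_distrib_left[symmetric] motA c_def ..
    finally show ?thesis .
  qed
  have R1: "(\<Sum>k=0..n+1. ((\<alpha> + s)/2) powi (int n - 2 * int k) * \<beta>^k / of_nat (n+1)
              * of_nat ((n+1) choose k) * of_nat ((n+1) choose (k+1))) = P"
  proof -
    have "(\<Sum>k=0..n+1. ((\<alpha> + s)/2) powi (int n - 2 * int k) * \<beta>^k / of_nat (n+1)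
              * of_nat ((n+1) choose k) * of_nat ((n+1) choose (k+1)))
        = (\<Sum>k\<le>n. x powi (int n - 2 * int k) * \<beta>^k / of_nat (n+1)
              * of_nat ((n+1) choose k) * of_nat ((n+1) choose (k+1)))"
    proof -
      have z: "Suc n choose Suc (Suc n) = 0" by (rule binomial_eq_0) simp
      show ?thesis by (simp add: atLeast0AtMost x_def z del: binomial_Suc_Suc)
    qed
    also have "\<dots> = (\<Sum>k\<le>n. x^n * (c k * t^k))"
    proof (intro sum.cong refl)
      fix k assume "k \<in> {..n}"
      have p: "x powi (int n - 2 * int k) * x^(2*k) = x^n"
      proof -
        have "x powi (int n - 2 * int k + int (2*k)) = x powi (int n - 2 * int k) * x powi (int (2*k))"
          using x0 by (rule power_int_add[OF disjI1])
        moreover have "int n - 2 * int k + int (2*k) = int n" by simp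
        ultimately show ?thesis by (simp only: power_int_of_nat)
      qed
      have q0: "(of_nat (Suc n choose Suc k) :: complex) * of_nat (Suc k) = of_nat (n choose k) * of_nat (Suc n)"
        using arg_cong[OF Suc_times_binomial[of k n], where f="of_nat :: nat \<Rightarrow> complex"]
        by (simp only: of_nat_mult mult.commute)
      have q: "of_nat ((n+1) choose (k+1)) / of_nat (n+1) = (of_nat (n choose k) / of_nat (k+1) :: complex)"
        unfolding Suc_eq_plus1[symmetric]
        by (subst frac_eq_eq) (use q0 in \<open>simp_all only: of_nat_eq_0_iff Suc_neq_Zero not_False_eq_True\<close>)
      have "x powi (int n - 2 * int k) * \<beta>^k = x^n * t^k"
        unfolding bt power_mult_distrib power_mult[symmetric] using p by (simp add: mult_ac)
      thus "x powi (int n - 2 * int k) * \<beta>^k / of_nat (n+1)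
              * of_nat ((n+1) choose k) * of_nat ((n+1) choose (k+1)) = x^n * (c k * t^k)"
        unfolding c_def using q by (simp add: field_simps del: of_nat_Suc binomial_Suc_Suc)
    qed
    also have "\<dots> = P" unfolding P_def sum_distrib_left ..
    finally show ?thesis .
  qed
  define w where "w = y / s"
  have yw: "y = s * w" unfolding w_def using s0 by simp
  have xw: "x = s * (1+w)" unfolding w_def using s0
    by (simp add: x_def y_def distrib_left) (simp add: field_simps)
  have w1: "1 + w \<noteq> 0" using xw x0 by auto
  define Q where "Q = (\<Sum>k\<le>n. c k * w^k * (1+w)^(n-k))"
  have PQ: "P = s^n * Q"
    unfolding P_def Q_def sum_distrib_left
  proof (intro sum.cong refl)
    fix k assume "k \<in> {..n}"
    hence k: "k \<le> n" by simp
    have e: "x^n = x^(n-k) * x^k" using k by (simp add: power_add[symmetric])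
    have es: "s^n = s^(n-k) * s^k" using k by (simp add: power_add[symmetric])
    have xk: "x^k \<noteq> 0" using x0 by simp
    have "x^n * t^k = x^(n-k) * y^k" unfolding t_def power_divide e using xk x0 by simp
    hence "x^n * (c k * t^k) = c k * (x^(n-k) * y^k)" by (simp only: mult_ac)
    also have "\<dots> = c k * (s^(n-k) * s^k) * (w^k * (1+w)^(n-k))"
      unfolding xw yw power_mult_distrib by (simp only: mult_ac)
    also have "\<dots> = s^n * (c k * w^k * (1+w)^(n-k))" unfolding es by (simp only: mult_ac)
    finally show "x^n * (c k * t^k) = s^n * (c k * w^k * (1+w)^(n-k))" .
  qed
  have R2: "s^(n+2) / \<beta> * (\<Sum>k=0..n+1. (\<alpha>/s - 1)^(k+1) * of_nat (catalan k) / 2^(k+1)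
              * of_nat ((n+1+k) choose (2*k))) = P"
  proof -
    have aw: "\<alpha>/s - 1 = 2*w" unfolding w_def y_def using s0 by (simp add: field_simps)
    have "(\<Sum>k=0..n+1. (\<alpha>/s - 1)^(k+1) * of_nat (catalan k) / 2^(k+1)
              * of_nat ((n+1+k) choose (2*k)))
        = w * (\<Sum>j\<le>Suc n. of_nat (catalan j) * of_nat ((n+1+j) choose (2*j)) * w^j)"
      unfolding aw sum_distrib_left atLeast0AtMost Suc_eq_plus1[symmetric]
      by (intro sum.cong refl) (simp add: power_mult_distrib field_simps)
    also have "\<dots> = w * ((1+w) * Q)" unfolding motC Q_def c_def ..
    finally have e: "(\<Sum>k=0..n+1. (\<alpha>/s - 1)^(k+1) * of_nat (catalan k) / 2^(k+1)
              * of_nat ((n+1+k) choose (2*k))) = w * ((1+w) * Q)" .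
    have b2: "\<beta> = s^2 * (w * (1+w))" using bxy unfolding xw yw by (simp add: power2_eq_square mult_ac)
    have wnz: "w \<noteq> 0" using yw y0 by auto
    define D where "D = s^2 * (w * (1+w))"
    have D0: "D \<noteq> 0" unfolding D_def using s0 wnz w1 by simp
    have "s^(n+2) / \<beta> * (w * ((1+w) * Q)) = (s^n * Q) * (D / D)"
      unfolding b2 D_def using s0 wnz w1 by (simp add: power_add field_simps power2_eq_square)
    thus ?thesis unfolding e PQ using D0 by simp
  qed
  show ?thesis using M R1 R2 by simp
qed

end
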